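(* There is an absolute constant $C>0$ such that the following holds for all integers $k\ge 2$ (with $k$ even), all $\gamma\in(0,1]$ and all $\varepsilon\in(0,1]$. If $n\ge C\,k/(\gamma^2\varepsilon^2)$, then there exists a public-coin $\varepsilon$-LDP protocol with $n$ users, in which each user sends a single bit, together with a decision rule for the curator, that is a uniformity tester over $[k]$ with distance parameter $\gamma$. (In this protocol the shared randomness consists of $O(1)$ independent uniformly random subsets $S\subseteq[k]$ of cardinality $k/2$; a user assigned to subset $S$ sends the bit $\mathbf 1\{X\in S\}$ after flipping it with probability $1/(1+e^{\varepsilon})$.)
   Context: For a finite set $\Omega$, $\Delta(\Omega)$ denotes the set of probability distributions on $\Omega$, and $d_{TV}(p,q)=\sup_{S\subseteq\Omega}(p(S)-q(S))=\frac12\|p-q\|_1$. $u$ denotes the uniform distribution on $[k]=\{1,\dots,k\}$. Protocol model: there are $n$ users; user $j$ holds $X_j$, where $X_1,\dots,X_n$ are i.i.d. from an unknown distribution $p$. A public-coin protocol consists of a shared random variable $U$ independent of the samples, and for each user $j$ and each value $v$ of $U$ a channel (Markov kernel) $W_j^{v}$ from the data domain to a finite message set; user $j$ sends $Z_j\sim W_j^{U}(\cdot\mid X_j)$, independently across users given $U$ and the samples; the curator outputs a (possibly randomized) function of $(U,Z_1,\dots,Z_n)$. The protocol is private-coin if $U$ is constant, and symmetric if $W_j^v$ does not depend on $j$. It is $\varepsilon$-LDP if $W_j^v(z\mid x)\le e^{\varepsilon}W_j^v(z\mid x')$ for all $j,v,z,x,x'$. A uniformity tester over $[k]$ with distance parameter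 $\gamma$ is a protocol whose curator output, for every $p\in\Delta([k])$, equals ``uniform'' with probability at least $2/3$ if $p=u$, and equals ``not uniform'' with probability at least $2/3$ if $d_{TV}(p,u)>\gamma$ (probabilities over samples, shared and private randomness). *)

theory Defs
  imports "HOL-Probability.Probability"
begin

definition unif :: "nat \<Rightarrow> nat pmf" where
  "unif k = pmf_of_set {1..k}"

definition dTV :: "nat pmf \<Rightarrow> nat pmf \<Rightarrow> real" where
  "dTV p q = (SUP S. measure_pmf.prob p S - measure_pmf.prob q S)"

text \<open>U : distribution of the shared random variable (values: lists of subsets of nat);
  W j v : channel of user j given shared value v (data \<mapsto> distribution on one bit);
  D v zs : curator's randomized decision (True = "uniform") from shared value and messages.\<close>
definition protocol_out ::
  "nat \<Rightarrow> nat set list pmf \<Rightarrow> (nat \<Rightarrow> nat set list \<Rightarrow> nat \<Rightarrow> bool pmf)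
     \<Rightarrow> (nat set list \<Rightarrow> (nat \<Rightarrow> bool) \<Rightarrow> bool pmf) \<Rightarrow> nat pmf \<Rightarrow> bool pmf" where
  "protocol_out n U W D p =
     do { v \<leftarrow> U;
          xs \<leftarrow> Pi_pmf {..<n} 0 (\<lambda>_. p);
          zs \<leftarrow> Pi_pmf {..<n} False (\<lambda>j. W j v (xs j));
          D v zs }"

definition is_LDP ::
  "real \<Rightarrow> nat \<Rightarrow> nat \<Rightarrow> (nat \<Rightarrow> nat set list \<Rightarrow> nat \<Rightarrow> bool pmf) \<Rightarrow> bool" where
  "is_LDP \<epsilon> k n W \<longleftrightarrow>
     (\<forall>j<n. \<forall>v z. \<forall>x\<in>{1..k}. \<forall>x'\<in>{1..k}. pmf (W j v x) z \<le> exp \<epsilon> * pmf (W j v x') z)"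

definition is_uniformity_tester ::
  "nat \<Rightarrow> real \<Rightarrow> nat \<Rightarrow> nat set list pmf \<Rightarrow> (nat \<Rightarrow> nat set list \<Rightarrow> nat \<Rightarrow> bool pmf)
     \<Rightarrow> (nat set list \<Rightarrow> (nat \<Rightarrow> bool) \<Rightarrow> bool pmf) \<Rightarrow> bool" where
  "is_uniformity_tester k \<gamma> n U W D \<longleftrightarrow>
     (\<forall>p. set_pmf p \<subseteq> {1..k} \<longrightarrow>
        (p = unif k \<longrightarrow> measure_pmf.prob (protocol_out n U W D p) {True} \<ge> 2/3) \<and>
        (dTV p (unif k) > \<gamma> \<longrightarrow> measure_pmf.prob (protocol_out n U W D p) {False} \<ge> 2/3))"

end

theory Submission
  imports Defs
begin

definition sgZ :: "(nat \<Rightarrow> real) \<Rightarrow> nat set \<Rightarrow> nat set \<Rightarrow> real" where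
  "sgZ d A S = (\<Sum>x\<in>A. d x * (if x \<in> S then 1 else -1))"

lemma sgZ_ins1:
  assumes "finite A" "a \<notin> A" "S \<subseteq> A"
  shows "sgZ d (insert a A) S = sgZ d A S - d a"
  using assms by (auto simp: sgZ_def)

lemma sgZ_ins2:
  assumes "finite A" "a \<notin> A" "S \<subseteq> A"
  shows "sgZ d (insert a A) (insert a S) = sgZ d A S + d a"
proof -
  have "sgZ d A (insert a S) = sgZ d A S" unfolding sgZ_def
    using assms by (intro sum.cong) auto
  thus ?thesis using assms by (simp add: sgZ_def)
qed

lemma sum_Pow_insert:
  fixes f :: "nat set \<Rightarrow> real"
  assumes "finite A" "a \<notin> A"
  shows "(\<Sum>S\<in>Pow (insert a A). f S) = (\<Sum>S\<in>Pow A. f S + f (insert a S))"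
proof -
  have "Pow (insert a A) = Pow A \<union> insert a ` Pow A" by (rule Pow_insert)
  moreover have "Pow A \<inter> insert a ` Pow A = {}" using assms by auto
  moreover have "inj_on (insert a) (Pow A)" using assms
    by (auto simp: inj_on_def)
  ultimately show ?thesis using assms
    by (simp add: sum.union_disjoint sum.reindex sum.distrib)
qed

lemma moment2:
  assumes "finite A"
  shows "(\<Sum>S\<in>Pow A. (sgZ d A S)^2) = 2 ^ card A * (\<Sum>x\<in>A. (d x)^2)"
  using assms
proof (induction A rule: finite_induct)
  case empty
  then show ?case by (simp add: sgZ_def)
next
  case (insert a A)
  have "(\<Sum>S\<in>Pow (insert a A). (sgZ d (insert a A) S)^2)
     = (\<Sum>S\<in>Pow A. (sgZ d A S - d a)^2 + (sgZ d A S + d a)^2)"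
    using insert by (simp add: sum_Pow_insert sgZ_ins1 sgZ_ins2)
  also have "\<dots> = (\<Sum>S\<in>Pow A. 2 * (sgZ d A S)^2 + 2 * (d a)^2)"
    by (intro sum.cong) (auto simp: power2_eq_square algebra_simps)
  also have "\<dots> = 2 * (\<Sum>S\<in>Pow A. (sgZ d A S)^2) + 2 * 2 ^ card A * (d a)^2"
    using insert.hyps by (simp add: sum.distrib sum_distrib_left[symmetric] card_Pow)
  also have "\<dots> = 2 * (2 ^ card A * (\<Sum>x\<in>A. (d x)^2)) + 2 * 2 ^ card A * (d a)^2"
    using insert.IH by simp
  finally show ?case using insert by (simp add: algebra_simps)
qed

lemma moment4:
  assumes "finite A"
  shows "(\<Sum>S\<in>Pow A. (sgZ d A S)^4) \<le> 3 * 2 ^ card A * (\<Sum>x\<in>A. (d x)^2)^2"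
  using assms
proof (induction A rule: finite_induct)
  case empty
  then show ?case by (simp add: sgZ_def)
next
  case (insert a A)
  define s where "s = (\<Sum>x\<in>A. (d x)^2)"
  have "(\<Sum>S\<in>Pow (insert a A). (sgZ d (insert a A) S)^4)
     = (\<Sum>S\<in>Pow A. (sgZ d A S - d a)^4 + (sgZ d A S + d a)^4)"
    using insert by (simp add: sum_Pow_insert sgZ_ins1 sgZ_ins2)
  also have "\<dots> = (\<Sum>S\<in>Pow A. 2 * (sgZ d A S)^4 + 12 * (d a)^2 * (sgZ d A S)^2 + 2 * (d a)^4)"
    by (intro sum.cong) (auto simp: power_def algebra_simps)
  also have "\<dots> = 2 * (\<Sum>S\<in>Pow A. (sgZ d A S)^4) + 12 * (d a)^2 * (\<Sum>S\<in>Pow A. (sgZ d A S)^2)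
       + 2 * 2 ^ card A * (d a)^4"
    using insert.hyps by (simp add: sum.distrib sum_distrib_left[symmetric] card_Pow)
  also have "\<dots> \<le> 2 * (3 * 2 ^ card A * s^2) + 12 * (d a)^2 * (2 ^ card A * s) + 2 * 2 ^ card A * (d a)^4"
    using insert by (simp add: moment2 s_def)
  also have "\<dots> \<le> 3 * 2 ^ card (insert a A) * (s + (d a)^2)^2"
  proof -
    have "(0::real) \<le> 4 * 2 ^ card A * (d a)^4" by simp
    thus ?thesis using insert.hyps by (simp add: power2_eq_square power4_eq_xxxx algebra_simps)
  qed
  finally show ?case using insert by (simp add: s_def add.commute)
qed

lemma anticonc:
  assumes "finite A" "(\<Sum>x\<in>A. (d x)^2) > 0"
  shows "12 * card {S\<in>Pow A. (sgZ d A S)^2 \<ge> (\<Sum>x\<in>A. (d x)^2) / 2} \<ge> (2::real) ^ card A"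
proof -
  define s where "s = (\<Sum>x\<in>A. (d x)^2)"
  define G where "G = {S\<in>Pow A. (sgZ d A S)^2 \<ge> s / 2}"
  have s: "s > 0" using assms s_def by simp
  have pw: "(sgZ d A S)^2 \<le> s / 2 + 3 * s * (if S \<in> G then 1 else 0) + (sgZ d A S)^4 / (12 * s)"
    if "S \<in> Pow A" for S
  proof (cases "S \<in> G")
    case True
    have "0 \<le> ((sgZ d A S)^2 - 6 * s)^2 / (12 * s)" using s by simp
    hence "(sgZ d A S)^2 \<le> 3 * s + (sgZ d A S)^4 / (12 * s)" using s
      by (simp add: field_simps power2_eq_square power4_eq_xxxx)
    then show ?thesis using True s by simp
  next
    case False
    then have "(sgZ d A S)^2 < s/2" using that G_def by auto
    moreover have "(sgZ d A S)^4 / (12 * s) \<ge> 0" using s by simp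
    ultimately show ?thesis using False by simp
  qed
  have "2 ^ card A * s = (\<Sum>S\<in>Pow A. (sgZ d A S)^2)" using moment2[OF assms(1)] s_def by simp
  also have "\<dots> \<le> (\<Sum>S\<in>Pow A. s / 2 + 3 * s * (if S \<in> G then 1 else 0) + (sgZ d A S)^4 / (12 * s))"
    by (intro sum_mono pw)
  also have "\<dots> = 2 ^ card A * s / 2 + 3 * s * card G + (\<Sum>S\<in>Pow A. (sgZ d A S)^4) / (12 * s)"
  proof -
    have "(\<Sum>S\<in>Pow A. (if S \<in> G then 1 else 0::real)) = card G"
      using assms(1) by (simp add: sum.If_cases G_def Int_def)
    thus ?thesis using assms(1) by (simp add: sum.distrib sum_distrib_left[symmetric] sum_divide_distrib[symmetric] card_Pow)
  qed
  also have "\<dots> \<le> 2 ^ card A * s / 2 + 3 * s * card G + (3 * 2 ^ card A * s^2) / (12 * s)"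
  proof -
    have "(\<Sum>S\<in>Pow A. (sgZ d A S)^4) / (12 * s) \<le> (3 * 2 ^ card A * s^2) / (12 * s)"
      using moment4[OF assms(1), of d] s s_def by (intro divide_right_mono) auto
    thus ?thesis by linarith
  qed
  finally have "2 ^ card A * s \<le> 2 ^ card A * s / 2 + 3 * s * card G + (3 * 2 ^ card A * s^2) / (12 * s)" .
  hence "2 ^ card A * s \<le> 12 * s * card G" using s by (simp add: power2_eq_square field_simps)
  hence "2 ^ card A \<le> 12 * real (card G)" using s by (simp add: mult.commute mult.left_commute)
  thus ?thesis by (simp add: G_def s_def)
qed


lemma hoeff:
  fixes q :: "nat \<Rightarrow> bool pmf" and G I :: "nat set"
  assumes "finite I" "G \<subseteq> I" "G \<noteq> {}" "t \<ge> 0"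
  shows "measure_pmf.prob (Pi_pmf I False q)
     {zs. t \<le> \<bar>(\<Sum>j\<in>G. if zs j then 1 else 0) - (\<Sum>j\<in>G. pmf (q j) True)\<bar>}
     \<le> 2 * exp (-2 * t^2 / card G)"
proof -
  have finG: "finite G" using assms finite_subset by blast
  have ex: "measure_pmf.expectation (Pi_pmf I False q) (\<lambda>f. if f j then 1 else 0::real) = pmf (q j) True"
    if "j \<in> G" for j
  proof -
    have "measure_pmf.expectation (Pi_pmf I False q) (\<lambda>f. if f j then 1 else 0::real)
        = measure_pmf.expectation (map_pmf (\<lambda>f. f j) (Pi_pmf I False q)) (\<lambda>b. if b then 1 else 0::real)"
      by simp
    also have "map_pmf (\<lambda>f. f j) (Pi_pmf I False q) = q j"
      using assms that by (subst Pi_pmf_component) auto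
    also have "measure_pmf.expectation (q j) (\<lambda>b. if b then 1 else 0::real) = pmf (q j) True"
      by (subst integral_measure_pmf_real[where A=UNIV]) (auto simp: UNIV_bool)
    finally show ?thesis .
  qed
  interpret H: Hoeffding_ineq "measure_pmf (Pi_pmf I False q)" G "\<lambda>j f. if f j then 1 else 0"
     "\<lambda>_. 0" "\<lambda>_. 1" "\<Sum>j\<in>G. pmf (q j) True"
  proof unfold_locales
    show "prob_space.indep_vars (measure_pmf (Pi_pmf I False q)) (\<lambda>_. borel) (\<lambda>j f. if f j then 1 else 0::real) G"
      by (intro prob_space.indep_vars_compose2[OF _ prob_space.indep_vars_subset[OF _ indep_vars_Pi_pmf]])
         (use assms in \<open>auto simp: measure_pmf.prob_space_axioms\<close>)
    show "(\<Sum>j\<in>G. pmf (q j) True) \<equiv> (\<Sum>j\<in>G. measure_pmf.expectation (Pi_pmf I False q) (\<lambda>f. if f j then 1 else 0))"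
      using ex by simp
  qed (auto simp: finG)
  have "measure_pmf.prob (Pi_pmf I False q)
     {zs \<in> space (measure_pmf (Pi_pmf I False q)). \<bar>(\<Sum>j\<in>G. if zs j then 1 else 0) - (\<Sum>j\<in>G. pmf (q j) True)\<bar> \<ge> t}
     \<le> 2 * exp (-2 * t^2 / (\<Sum>j\<in>G. (1 - 0)^2))"
    by (rule H.Hoeffding_ineq_abs_ge) (use assms finG in \<open>auto simp: card_gt_0_iff\<close>)
  thus ?thesis by simp
qed

lemma dtv_far:
  fixes p :: "nat pmf" and k :: nat and \<gamma> :: real
  assumes sp: "set_pmf p \<subseteq> {1..k}" and k: "k \<ge> 1" and far: "dTV p (unif k) > \<gamma>" and g: "\<gamma> > 0"
  shows "(\<Sum>x\<in>{1..k}. (pmf p x - 1/k)^2) > \<gamma>^2 / k"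
proof -
  define A where "A = {1..k}"
  have bdd: "bdd_above ((\<lambda>S. measure_pmf.prob p S - measure_pmf.prob (unif k) S) ` UNIV)"
    by (intro bdd_aboveI[where M=1]) (auto simp: diff_le_eq intro: add_mono[OF measure_pmf.prob_le_1 measure_nonneg, simplified])
  from far obtain S where S: "\<gamma> < measure_pmf.prob p S - measure_pmf.prob (unif k) S"
    unfolding dTV_def using less_cSUP_iff[OF _ bdd] by auto
  define B where "B = S \<inter> A"
  have finB: "finite B" by (simp add: B_def A_def)
  have "measure_pmf.prob p S = measure_pmf.prob p B"
  proof -
    have "measure_pmf.prob p S = measure_pmf.prob p (S \<inter> set_pmf p)" by (simp add: measure_Int_set_pmf)
    also have "S \<inter> set_pmf p = B \<inter> set_pmf p" using sp by (auto simp: B_def A_def)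
    also have "measure_pmf.prob p \<dots> = measure_pmf.prob p B" by (simp add: measure_Int_set_pmf)
    finally show ?thesis .
  qed
  also have "\<dots> = (\<Sum>x\<in>B. pmf p x)" using finB by (simp add: measure_measure_pmf_finite)
  finally have pS: "measure_pmf.prob p S = (\<Sum>x\<in>B. pmf p x)" .
  have uS: "measure_pmf.prob (unif k) S = card B / k"
    using k by (simp add: unif_def measure_pmf_of_set B_def A_def Int_commute)
  have "\<gamma> < (\<Sum>x\<in>B. pmf p x - 1/k)"
    using S pS uS by (simp add: sum_subtractf)
  hence "\<gamma>^2 < (\<Sum>x\<in>B. pmf p x - 1/k)^2" using g by (intro power_strict_mono) auto
  also have "\<dots> \<le> (\<Sum>x\<in>B. (pmf p x - 1/k)^2) * card B" by (rule sum_squared_le_sum_of_squares)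
  also have "\<dots> \<le> (\<Sum>x\<in>A. (pmf p x - 1/k)^2) * k"
  proof (rule mult_mono)
    show "(\<Sum>x\<in>B. (pmf p x - 1/k)^2) \<le> (\<Sum>x\<in>A. (pmf p x - 1/k)^2)"
      by (rule sum_mono2) (auto simp: A_def B_def)
    have "card B \<le> card A" by (rule card_mono) (auto simp: A_def B_def)
    thus "real (card B) \<le> real k" by (simp add: A_def)
  qed (auto intro: sum_nonneg)
  finally show ?thesis using k by (simp add: A_def field_simps)
qed

lemma sum_delta0:
  fixes p :: "nat pmf"
  assumes sp: "set_pmf p \<subseteq> {1..k}" and k: "k \<ge> 1"
  shows "(\<Sum>x\<in>{1..k}. pmf p x - 1/k) = 0"
  using sum_pmf_eq_1[OF _ sp] k by (simp add: sum_subtractf)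


lemma chan_true:
  fixes p :: "nat pmf"
  assumes "0 \<le> r" "r \<le> 1" "finite A" "set_pmf p \<subseteq> A" "S \<subseteq> A"
  shows "pmf (p \<bind> (\<lambda>x. bernoulli_pmf (if x \<in> S then 1 - r else r))) True
         = r + (1 - 2*r) * (\<Sum>x\<in>S. pmf p x)"
proof -
  have "pmf (p \<bind> (\<lambda>x. bernoulli_pmf (if x \<in> S then 1 - r else r))) True
      = measure_pmf.expectation p (\<lambda>x. if x \<in> S then 1 - r else r)"
    unfolding pmf_bind using assms by (intro Bochner_Integration.integral_cong) auto
  also have "\<dots> = (\<Sum>a\<in>A. (if a \<in> S then 1 - r else r) * pmf p a)"
    using assms by (subst integral_measure_pmf_real[where A=A]) auto
  also have "\<dots> = (\<Sum>a\<in>A. r * pmf p a + (1 - 2*r) * (if a \<in> S then pmf p a else 0))"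
    by (intro sum.cong) (auto simp: algebra_simps)
  also have "\<dots> = r * (\<Sum>a\<in>A. pmf p a) + (1 - 2*r) * (\<Sum>a\<in>A. if a \<in> S then pmf p a else 0)"
    by (simp add: sum.distrib sum_distrib_left)
  also have "(\<Sum>a\<in>A. pmf p a) = 1" using assms by (intro sum_pmf_eq_1) auto
  also have "(\<Sum>a\<in>A. if a \<in> S then pmf p a else 0) = (\<Sum>a\<in>S. pmf p a)"
    using assms by (simp add: sum.If_cases Int_absorb1 Int_commute)
  finally show ?thesis by simp
qed

lemma group_bound:
  fixes p :: "nat pmf" and v :: "nat set list"
  assumes r: "0 \<le> r" "r \<le> 1" and sp: "set_pmf p \<subseteq> {1..k}" and gL: "Suc g * L \<le> n" and L: "L > 0"
    and vg: "v ! g \<subseteq> {1..k}" and t: "t \<ge> 0"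
  shows "measure_pmf.prob (Pi_pmf {..<n} False (\<lambda>j. p \<bind> (\<lambda>x. bernoulli_pmf (if x \<in> v ! (j div L) then 1 - r else r))))
     {zs. t \<le> \<bar>(\<Sum>j\<in>{g*L..<Suc g*L}. if zs j then 1 else 0) - L * (r + (1 - 2*r) * (\<Sum>x\<in>v!g. pmf p x))\<bar>}
     \<le> 2 * exp (-2 * t^2 / L)"
proof -
  define G where "G = {g*L..<Suc g*L}"
  have GI: "G \<subseteq> {..<n}" using gL by (auto simp: G_def)
  have Gne: "G \<noteq> {}" using L by (auto simp: G_def)
  have cG: "card G = L" by (simp add: G_def)
  have "(\<Sum>j\<in>G. pmf (p \<bind> (\<lambda>x. bernoulli_pmf (if x \<in> v ! (j div L) then 1 - r else r))) True)
      = (\<Sum>j\<in>G. r + (1 - 2*r) * (\<Sum>x\<in>v!g. pmf p x))"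
  proof (intro sum.cong refl)
    fix j assume "j \<in> G"
    hence "j div L = g" by (intro div_nat_eqI) (auto simp: G_def mult.commute)
    thus "pmf (p \<bind> (\<lambda>x. bernoulli_pmf (if x \<in> v ! (j div L) then 1 - r else r))) True
       = r + (1 - 2*r) * (\<Sum>x\<in>v!g. pmf p x)"
      using chan_true[OF r _ sp vg] by simp
  qed
  also have "\<dots> = L * (r + (1 - 2*r) * (\<Sum>x\<in>v!g. pmf p x))" using cG by simp
  finally have eq: "(\<Sum>j\<in>G. pmf (p \<bind> (\<lambda>x. bernoulli_pmf (if x \<in> v ! (j div L) then 1 - r else r))) True)
      = L * (r + (1 - 2*r) * (\<Sum>x\<in>v!g. pmf p x))" .
  have h: "measure_pmf.prob (Pi_pmf {..<n} False (\<lambda>j. p \<bind> (\<lambda>x. bernoulli_pmf (if x \<in> v ! (j div L) then 1 - r else r))))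
     {zs. t \<le> \<bar>(\<Sum>j\<in>G. if zs j then 1 else 0) - (\<Sum>j\<in>G. pmf (p \<bind> (\<lambda>x. bernoulli_pmf (if x \<in> v ! (j div L) then 1 - r else r))) True)\<bar>}
     \<le> 2 * exp (-2 * t^2 / card G)"
    by (rule hoeff) (use GI Gne t in auto)
  show ?thesis using h unfolding eq cG unfolding G_def .
qed


theorem theorem4p2:
  shows "\<exists>C>0. \<forall>(k::nat) (\<gamma>::real) (\<epsilon>::real) (n::nat).
           k \<ge> 2 \<and> even k \<and> 0 < \<gamma> \<and> \<gamma> \<le> 1 \<and> 0 < \<epsilon> \<and> \<epsilon> \<le> 1 \<and>
           real n \<ge> C * real k / (\<gamma>^2 * \<epsilon>^2) \<longrightarrow>
           (\<exists>U W D. is_LDP \<epsilon> k n W \<and> is_uniformity_tester k \<gamma> n U W D)"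
proof (intro exI[of _ "2000000::real"] conjI allI impI)
  show "(0::real) < 2000000" by simp
  fix k :: nat and \<gamma> \<epsilon> :: real and n :: nat
  assume H: "k \<ge> 2 \<and> even k \<and> 0 < \<gamma> \<and> \<gamma> \<le> 1 \<and> 0 < \<epsilon> \<and> \<epsilon> \<le> 1 \<and>
           real n \<ge> 2000000 * real k / (\<gamma>^2 * \<epsilon>^2)"
  hence k2: "k \<ge> 2" and g0: "0 < \<gamma>" and g1: "\<gamma> \<le> 1" and e0: "0 < \<epsilon>" and e1: "\<epsilon> \<le> 1"
    and nC: "real n \<ge> 2000000 * real k / (\<gamma>^2 * \<epsilon>^2)" by auto
  define m :: nat where "m = 24"
  define L where "L = n div m"
  define A where "A = {1..k}"
  define r where "r = 1 / (1 + exp \<epsilon>)"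
  define c where "c = 1 - 2 * r"
  define h where "h = \<gamma> / sqrt (8 * k)"
  define t where "t = L * c * h / 2"
  define W where "W = (\<lambda>(j::nat) (v::nat set list) (x::nat). bernoulli_pmf (if x \<in> v ! (j div L) then 1 - r else r))"
  define T where "T = (\<lambda>g (zs::nat\<Rightarrow>bool). \<Sum>j\<in>{g*L..<Suc g*L}. if zs j then 1 else (0::real))"
  define acc where "acc = (\<lambda>(v::nat set list) zs. \<forall>g<m. \<bar>T g zs - L * (r + c * (card (v ! g) / k))\<bar> \<le> t)"
  define D where "D = (\<lambda>v zs. return_pmf (acc v zs))"
  define Vs where "Vs = {xs. set xs \<subseteq> Pow A \<and> length xs = m}"
  define U where "U = pmf_of_set Vs"
  define Q where "Q = (\<lambda>p v. Pi_pmf {..<n} False (\<lambda>j. p \<bind> W j v))"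
  define bnd where "bnd = 2 * exp (-2 * t^2 / L)"

  have ee: "exp \<epsilon> \<ge> 1 + \<epsilon>" by (rule exp_ge_add_one_self)
  have e3: "exp \<epsilon> \<le> 3" using exp_le order.trans[OF exp_mono[OF e1]] by auto
  have pe: "1 + exp \<epsilon> > 0" "1 + exp \<epsilon> \<noteq> 0" by (smt (verit) exp_gt_zero)+
  have r0: "0 < r" by (simp add: r_def add_pos_pos)
  have r1: "r \<le> 1"
  proof -
    have pe: "(1::real) + exp \<epsilon> \<ge> 1" by (smt (verit) exp_gt_zero)
    thus ?thesis unfolding r_def by (smt (verit) divide_le_eq_1)
  qed
  have 1: "1 - r = exp \<epsilon> * r" using pe by (simp add: r_def field_simps)
  have cpos: "c * (1 + exp \<epsilon>) = exp \<epsilon> - 1" using pe by (simp add: c_def r_def field_simps)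
  have c0: "c > 0" using cpos ee e0
    by (smt (verit, ccfv_SIG) exp_gt_zero mult_nonpos_nonneg)
  have cE: "c \<ge> \<epsilon> / 4"
  proof -
    have "\<epsilon> \<le> c * (1 + exp \<epsilon>)" using cpos ee by linarith
    also have "\<dots> \<le> c * 4" using c0 e3 by (intro mult_left_mono) auto
    finally show ?thesis by simp
  qed
  have kpos: "real k > 0" using k2 by simp
  have nk: "real n * (\<gamma>^2 * \<epsilon>^2) \<ge> 2000000 * real k"
    using nC g0 e0 by (simp add: pos_divide_le_eq)
  have ge1: "\<gamma>^2 * \<epsilon>^2 \<le> 1" using g0 g1 e0 e1
    by (metis mult_le_one power_le_one zero_le_power2 less_imp_le)
  have n_big: "real n \<ge> 4000000"
  proof -
    have "4000000 \<le> 2000000 * real k" using k2 by simp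
    also have "\<dots> \<le> real n * (\<gamma>^2 * \<epsilon>^2)" by (rule nk)
    also have "\<dots> \<le> real n" using ge1 by (simp add: mult_left_le)
    finally show ?thesis .
  qed
  have nmL: "real n < 24 * (real L + 1)"
  proof -
    have "n < m * Suc (n div m)" using m_def by (simp add: dividend_less_times_div)
    hence "real n < real (m * Suc L)" unfolding L_def by linarith
    thus ?thesis by (simp add: m_def)
  qed
  have Lbig: "real L \<ge> real n / 48"
  proof -
    have "real n \<le> real L * 48" using nmL n_big by (smt (verit))
    thus ?thesis by simp
  qed
  have Lpos: "L > 0" using Lbig n_big by (cases L) auto
  have mLn: "m * L \<le> n" by (simp add: L_def)
  have h2: "h^2 = \<gamma>^2 / (8 * real k)" using kpos by (simp add: h_def power_divide)
  have hpos: "h > 0" using g0 kpos by (simp add: h_def)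
  have t0: "t \<ge> 0" using Lpos c0 hpos by (simp add: t_def)
  have expo: "2 * t^2 / L = L * c^2 * h^2 / 2"
    using Lpos by (simp add: t_def power2_eq_square field_simps)
  have big: "L * c^2 * h^2 / 2 \<ge> 143"
  proof -
    have "(\<epsilon>/4)^2 \<le> c^2" by (rule power_mono[OF cE]) (use e0 in simp)
    hence c2: "\<epsilon>^2 / 16 \<le> c^2" by (simp add: power_divide)
    have A1: "real n / 48 * (\<epsilon>^2 / 16) \<le> L * c^2"
      by (rule mult_mono[OF Lbig c2]) auto
    have A2: "real n / 48 * (\<epsilon>^2 / 16) * (\<gamma>^2 / (8 * real k)) \<le> L * c^2 * h^2"
      unfolding h2 by (rule mult_right_mono[OF A1]) simp
    hence "(real n / 48) * (\<epsilon>^2 / 16) * (\<gamma>^2 / (8 * real k)) / 2 \<le> L * c^2 * h^2 / 2"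
      by simp
    moreover have "(real n / 48) * (\<epsilon>^2 / 16) * (\<gamma>^2 / (8 * real k)) / 2 = (real n * (\<gamma>^2 * \<epsilon>^2)) / (12288 * k)"
      using kpos by (simp add: field_simps)
    moreover have "(real n * (\<gamma>^2 * \<epsilon>^2)) / (12288 * k) \<ge> 2000000 * k / (12288 * k)"
      using nk kpos by (intro divide_right_mono) auto
    moreover have "2000000 * k / (12288 * k) \<ge> (143::real)" using kpos by simp
    ultimately show ?thesis by linarith
  qed
  have bnd: "bnd \<le> 1/72"
  proof -
    have "exp (-2 * t^2 / L) \<le> exp (-143)" using expo big by simp
    also have "exp (-143::real) = 1 / exp 143" by (simp add: exp_minus field_simps)
    also have "\<dots> \<le> 1 / 144" using exp_ge_add_one_self[of "143::real"] by (intro divide_left_mono) auto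
    finally show ?thesis by (simp add: bnd_def)
  qed

  have finA: "finite A" by (simp add: A_def)
  have cardA: "card A = k" by (simp add: A_def)
  have finVs: "finite Vs" unfolding Vs_def using finA by (intro finite_lists_length_eq) auto
  have "replicate m {} \<in> Vs" by (auto simp: Vs_def set_replicate_conv_if)
  hence neVs: "Vs \<noteq> {}" by auto
  have cardVs: "card Vs = (2^k)^m" unfolding Vs_def by (subst card_lists_length_eq) (simp_all add: finA card_Pow cardA)
  have Vs_sub: "v ! g \<subseteq> A" if "v \<in> Vs" "g < m" for v g
  proof -
    have "v ! g \<in> set v" using that by (intro nth_mem) (simp add: Vs_def)
    thus ?thesis using that unfolding Vs_def by blast
  qed
  have proto: "protocol_out n U W D p = U \<bind> (\<lambda>v. map_pmf (acc v) (Q p v))" for p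
    unfolding protocol_out_def D_def Q_def
    by (intro bind_pmf_cong refl) (simp add: map_pmf_def bind_assoc_pmf Pi_pmf_bind[where d'=0])
  have pT: "pmf (protocol_out n U W D p) True = (\<Sum>v\<in>Vs. measure_pmf.prob (Q p v) {zs. acc v zs}) / card Vs" for p
  proof -
    have "pmf (protocol_out n U W D p) True = measure_pmf.expectation U (\<lambda>v. pmf (map_pmf (acc v) (Q p v)) True)"
      by (simp add: proto pmf_bind)
    also have "\<dots> = (\<Sum>v\<in>Vs. pmf (map_pmf (acc v) (Q p v)) True) / card Vs"
      unfolding U_def by (rule integral_pmf_of_set[OF neVs finVs])
    also have "\<dots> = (\<Sum>v\<in>Vs. measure_pmf.prob (Q p v) {zs. acc v zs}) / card Vs"
      by (simp add: pmf_map vimage_def)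
    finally show ?thesis .
  qed
  have pTF: "pmf (protocol_out n U W D p) True + pmf (protocol_out n U W D p) False = 1" for p
  proof -
    have "(\<Sum>b\<in>(UNIV::bool set). pmf (protocol_out n U W D p) b) = 1" by (rule sum_pmf_eq_1) auto
    thus ?thesis by (simp add: UNIV_bool add.commute)
  qed
  have grp: "measure_pmf.prob (Q p v) {zs. t \<le> \<bar>T g zs - L * (r + c * (\<Sum>x\<in>v!g. pmf p x))\<bar>} \<le> bnd"
    if sp: "set_pmf p \<subseteq> A" and v: "v \<in> Vs" and g: "g < m" for p v g
  proof -
    have "Suc g * L \<le> m * L" using g by (intro mult_right_mono) auto
    hence gL: "Suc g * L \<le> n" using mLn by linarith
    show ?thesis
      using group_bound[OF less_imp_le[OF r0] r1 sp[unfolded A_def] gL Lpos Vs_sub[OF v g, unfolded A_def] t0]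
      unfolding Q_def W_def T_def c_def bnd_def by simp
  qed

  have LDP: "is_LDP \<epsilon> k n W"
  proof -
    have rng: "r \<le> pmf (W j v x) z \<and> pmf (W j v x) z \<le> exp \<epsilon> * r" for j v x z
    proof -
      have "r \<le> exp \<epsilon> * r" using r0 ee e0 by simp
      moreover have "r \<le> 1 - r" using 1 r0 ee e0 by simp
      moreover have "pmf (W j v x) z = r \<or> pmf (W j v x) z = 1 - r"
        using r0 r1 by (cases z) (auto simp: W_def)
      ultimately show ?thesis using 1 by auto
    qed
    show ?thesis unfolding is_LDP_def
    proof (intro allI impI ballI)
      fix j v z x x'
      have "pmf (W j v x) z \<le> exp \<epsilon> * r" using rng by blast
      also have "\<dots> \<le> exp \<epsilon> * pmf (W j v x') z" using rng by (intro mult_left_mono) auto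
      finally show "pmf (W j v x) z \<le> exp \<epsilon> * pmf (W j v x') z" .
    qed
  qed

  have tester: "is_uniformity_tester k \<gamma> n U W D"
    unfolding is_uniformity_tester_def
  proof (intro allI impI conjI)
    fix p :: "nat pmf"
    assume sp0: "set_pmf p \<subseteq> {1..k}"
    hence sp: "set_pmf p \<subseteq> A" by (simp add: A_def)
    {
      assume pu: "p = unif k"
      have sumu: "(\<Sum>x\<in>S. pmf p x) = card S / k" if "S \<subseteq> A" for S
      proof -
        have "(\<Sum>x\<in>S. pmf p x) = (\<Sum>x\<in>S. 1 / k)"
          using that k2 by (intro sum.cong) (auto simp: pu unif_def A_def)
        thus ?thesis by simp
      qed
      have acc_hi: "measure_pmf.prob (Q p v) {zs. acc v zs} \<ge> 2/3" if v: "v \<in> Vs" for v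
      proof -
        have "{zs. \<not> acc v zs} \<subseteq> (\<Union>g\<in>{..<m}. {zs. t \<le> \<bar>T g zs - L * (r + c * (\<Sum>x\<in>v!g. pmf p x))\<bar>})"
          using sumu[OF Vs_sub[OF v]] by (auto simp: acc_def not_le intro: less_imp_le)
        hence "measure_pmf.prob (Q p v) {zs. \<not> acc v zs}
            \<le> measure_pmf.prob (Q p v) (\<Union>g\<in>{..<m}. {zs. t \<le> \<bar>T g zs - L * (r + c * (\<Sum>x\<in>v!g. pmf p x))\<bar>})"
          by (intro measure_pmf.finite_measure_mono) auto
        also have "\<dots> \<le> (\<Sum>g\<in>{..<m}. measure_pmf.prob (Q p v) {zs. t \<le> \<bar>T g zs - L * (r + c * (\<Sum>x\<in>v!g. pmf p x))\<bar>})"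
          by (intro measure_pmf.finite_measure_subadditive_finite) auto
        also have "\<dots> \<le> (\<Sum>g\<in>{..<m}. 1/72)"
        proof (intro sum_mono)
          fix g assume "g \<in> {..<m}"
          hence "measure_pmf.prob (Q p v) {zs. t \<le> \<bar>T g zs - L * (r + c * (\<Sum>x\<in>v!g. pmf p x))\<bar>} \<le> bnd"
            using grp[OF sp v] by simp
          thus "measure_pmf.prob (Q p v) {zs. t \<le> \<bar>T g zs - L * (r + c * (\<Sum>x\<in>v!g. pmf p x))\<bar>} \<le> 1/72"
            using bnd by linarith
        qed
        also have "\<dots> = 1/3" by (simp add: m_def)
        finally have "measure_pmf.prob (Q p v) {zs. \<not> acc v zs} \<le> 1/3" .
        moreover have "measure_pmf.prob (Q p v) {zs. acc v zs} = 1 - measure_pmf.prob (Q p v) {zs. \<not> acc v zs}"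
        proof -
          have "UNIV - {zs. \<not> acc v zs} = {zs. acc v zs}" by auto
          thus ?thesis using measure_pmf.prob_compl[of "{zs. \<not> acc v zs}" "Q p v"] by simp
        qed
        ultimately show ?thesis by simp
      qed
      have "(\<Sum>v\<in>Vs. (2/3::real)) \<le> (\<Sum>v\<in>Vs. measure_pmf.prob (Q p v) {zs. acc v zs})"
        using acc_hi by (intro sum_mono) auto
      hence "2/3 \<le> pmf (protocol_out n U W D p) True"
        using finVs neVs by (simp add: pT pos_le_divide_eq card_gt_0_iff)
      thus "2/3 \<le> measure_pmf.prob (protocol_out n U W D p) {True}" by (simp add: measure_pmf_single)
    }
    {
      assume far: "\<gamma> < dTV p (unif k)"
      define d where "d = (\<lambda>x. pmf p x - 1 / real k)"
      define s where "s = (\<Sum>x\<in>A. (d x)^2)"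
      have s: "s > \<gamma>^2 / k" using dtv_far[OF sp0 _ far g0] k2 by (simp add: s_def d_def A_def)
      have spos: "s > 0" using s g0 kpos by (smt (verit) divide_pos_pos zero_less_power)
      define Good where "Good = {S\<in>Pow A. (sgZ d A S)^2 \<ge> s / 2}"
      have cGood: "12 * card Good \<ge> (2::real) ^ k"
        using anticonc[OF finA spos[unfolded s_def]] by (simp add: Good_def s_def cardA)
      have d0: "(\<Sum>x\<in>A. d x) = 0" using sum_delta0[OF sp0] k2 by (simp add: d_def A_def)
      have goodh: "h < \<bar>(\<Sum>x\<in>S. pmf p x) - card S / k\<bar>" if S: "S \<in> Good" for S
      proof -
        have SA: "S \<subseteq> A" using S by (auto simp: Good_def)
        have "sgZ d A S = (\<Sum>x\<in>A. 2 * (if x \<in> S then d x else 0) - d x)"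
          unfolding sgZ_def by (intro sum.cong) auto
        also have "\<dots> = 2 * (\<Sum>x\<in>S. d x)"
          using d0 finA SA by (simp add: sum_subtractf sum_distrib_left[symmetric] sum.If_cases Int_absorb1 Int_commute)
        finally have Z: "sgZ d A S = 2 * (\<Sum>x\<in>S. d x)" .
        have eS: "(\<Sum>x\<in>S. d x) = (\<Sum>x\<in>S. pmf p x) - card S / k"
          by (simp add: d_def sum_subtractf)
        have "h^2 < (\<Sum>x\<in>S. d x)^2"
        proof -
          have "s / 2 \<le> (2 * (\<Sum>x\<in>S. d x))^2" using S Z by (simp add: Good_def)
          hence "s / 8 \<le> (\<Sum>x\<in>S. d x)^2" by (simp add: power_mult_distrib)
          moreover have "h^2 < s / 8" using s h2 by simp
          ultimately show ?thesis by simp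
        qed
        hence "h < \<bar>\<Sum>x\<in>S. d x\<bar>" using hpos
          by (metis abs_of_pos power2_abs power_mono not_le abs_ge_zero)
        thus ?thesis by (simp add: eS)
      qed
      have acc_lo: "measure_pmf.prob (Q p v) {zs. acc v zs} \<le> bnd"
        if v: "v \<in> Vs" and g: "g < m" and vg: "v ! g \<in> Good" for v g
      proof -
        have gh: "h < \<bar>(\<Sum>x\<in>v!g. pmf p x) - card (v!g) / k\<bar>" by (rule goodh[OF vg])
        have "L * c * h \<le> L * c * \<bar>(\<Sum>x\<in>v!g. pmf p x) - card (v!g) / k\<bar>"
          using gh Lpos c0 by (intro mult_left_mono) auto
        also have "\<dots> = \<bar>(L * c) * ((\<Sum>x\<in>v!g. pmf p x) - card (v!g) / k)\<bar>"
          using Lpos c0 by (simp add: abs_mult)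
        also have "(L * c) * ((\<Sum>x\<in>v!g. pmf p x) - card (v!g) / k)
            = L * (r + c * (\<Sum>x\<in>v!g. pmf p x)) - L * (r + c * (card (v ! g) / k))"
          by (simp add: algebra_simps)
        finally have key: "2 * t \<le> \<bar>L * (r + c * (\<Sum>x\<in>v!g. pmf p x)) - L * (r + c * (card (v ! g) / k))\<bar>"
          by (simp add: t_def)
        have "{zs. acc v zs} \<subseteq> {zs. t \<le> \<bar>T g zs - L * (r + c * (\<Sum>x\<in>v!g. pmf p x))\<bar>}"
        proof safe
          fix zs assume "acc v zs"
          hence "\<bar>T g zs - L * (r + c * (card (v ! g) / k))\<bar> \<le> t" using g by (simp add: acc_def)
          thus "t \<le> \<bar>T g zs - L * (r + c * (\<Sum>x\<in>v!g. pmf p x))\<bar>" using key by (smt (verit))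
        qed
        hence "measure_pmf.prob (Q p v) {zs. acc v zs}
           \<le> measure_pmf.prob (Q p v) {zs. t \<le> \<bar>T g zs - L * (r + c * (\<Sum>x\<in>v!g. pmf p x))\<bar>}"
          by (intro measure_pmf.finite_measure_mono) auto
        also have "\<dots> \<le> bnd" by (rule grp[OF sp v g])
        finally show ?thesis .
      qed
      define Bad where "Bad = {xs. set xs \<subseteq> Pow A - Good \<and> length xs = m}"
      have BadVs: "Bad \<subseteq> Vs" by (auto simp: Bad_def Vs_def)
      have cardBad: "card Bad = (card (Pow A - Good))^m" unfolding Bad_def by (rule card_lists_length_eq) (simp add: finA)
      have cPG: "real (card (Pow A - Good)) \<le> 11/12 * 2^k"
      proof -
        have "Good \<subseteq> Pow A" by (auto simp: Good_def)
        hence "card (Pow A - Good) = 2^k - card Good" using finA by (simp add: card_Diff_subset card_Pow cardA finite_subset)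
        moreover have "card Good \<le> 2^k" using \<open>Good \<subseteq> Pow A\<close> finA by (metis card_mono card_Pow cardA finite_Pow_iff)
        ultimately have "real (card (Pow A - Good)) = 2^k - real (card Good)" by simp
        thus ?thesis using cGood by simp
      qed
      have bound_v: "measure_pmf.prob (Q p v) {zs. acc v zs} \<le> (if v \<in> Bad then 1 else 0) + bnd"
        if v: "v \<in> Vs" for v
      proof (cases "v \<in> Bad")
        case True
        then show ?thesis using bnd_def by (simp add: add_increasing2)
      next
        case False
        then obtain S where S1: "S \<in> set v" and S2: "S \<notin> Pow A - Good" using v by (auto simp: Bad_def Vs_def)
        have SG: "S \<in> Good" using S1 S2 v unfolding Vs_def by blast
        obtain g where g0: "g < length v" "v ! g = S" using S1 by (auto simp: in_set_conv_nth)
        have g: "g < length v" "v ! g = S" "S \<in> Good" using g0 SG by auto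
        have "g < m" using g v by (simp add: Vs_def)
        thus ?thesis using acc_lo[OF v _ ] g False by simp
      qed
      have "(\<Sum>v\<in>Vs. measure_pmf.prob (Q p v) {zs. acc v zs}) \<le> (\<Sum>v\<in>Vs. (if v \<in> Bad then 1 else 0) + bnd)"
        using bound_v by (intro sum_mono) auto
      also have "\<dots> = card Bad + card Vs * bnd"
        using BadVs finVs by (simp add: sum.distrib sum.If_cases Int_absorb1[OF BadVs] Int_absorb2[OF BadVs])
      finally have sumle: "(\<Sum>v\<in>Vs. measure_pmf.prob (Q p v) {zs. acc v zs}) \<le> card Bad + card Vs * bnd" .
      have VsP: "real (card Vs) > 0" using finVs neVs by (simp add: card_gt_0_iff)
      have "real (card Bad) / card Vs \<le> (11/12)^24"
      proof -
        have "real (card Bad) / card Vs = (real (card (Pow A - Good)) / 2^k)^m"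
          by (simp add: cardBad cardVs power_divide)
        also have "\<dots> \<le> (11/12)^m"
          using cPG by (intro power_mono) (auto simp: divide_le_eq)
        finally show ?thesis by (simp add: m_def)
      qed
      moreover have "(11/12::real)^24 \<le> 3/10" by (simp add: power_divide)
      moreover have "pmf (protocol_out n U W D p) True \<le> real (card Bad) / card Vs + bnd"
      proof -
        have "(\<Sum>v\<in>Vs. measure_pmf.prob (Q p v) {zs. acc v zs}) / card Vs \<le> (card Bad + card Vs * bnd) / card Vs"
          by (rule divide_right_mono[OF sumle]) simp
        also have "\<dots> = real (card Bad) / card Vs + bnd" using VsP by (simp add: add_divide_distrib)
        finally show ?thesis by (simp add: pT)
      qed
      ultimately have "pmf (protocol_out n U W D p) True \<le> 1/3" using bnd by linarith
      hence "2/3 \<le> pmf (protocol_out n U W D p) False" using pTF[of p] by linarith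
      thus "2/3 \<le> measure_pmf.prob (protocol_out n U W D p) {False}" by (simp add: measure_pmf_single)
    }
  qed
  show "\<exists>U W D. is_LDP \<epsilon> k n W \<and> is_uniformity_tester k \<gamma> n U W D"
    using LDP tester by blast
qed

end
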